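(* Let $H=\operatorname{diag}(\lambda_1,\dots,\lambda_n)$ with $\lambda_1\ge\dots\ge\lambda_{n-p}\ge0>\lambda_{n-p+1}\ge\dots\ge\lambda_n$ for some $1\le p<n$, let $L=\max(\lambda_1,-\lambda_n)$ and $0<\alpha<1/L$. Let $(\gamma_k)_{k\ge1}$, $(\beta_k)_{k\ge1}$ be nondecreasing sequences in $[0,1]$ with $\gamma_k=\beta_k$ for all $k$ and $\lim_{k\to\infty}\gamma_k=\lim_{k\to\infty}\beta_k=1$. For $i$ with $\lambda_i<0$ define $b_{i,0}=0$ and, for $k\ge1$, \[ b_{i,k}=(\beta_k+\gamma_k\alpha|\lambda_i|)\Big(1-\frac{1}{1+b_{i,k-1}}\Big)+\alpha|\lambda_i|. \] Then for all $i$ with $\lambda_i<0$, \[ \lim_{k\to\infty}b_{i,k}=\alpha|\lambda_i|+\sqrt{\alpha|\lambda_i|}\sqrt{1+\alpha|\lambda_i|}. \]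
   Context: The quantities $b_{i,k}$ describe the per-iteration growth factors $x_i^{k+1}=x_i^0\prod_{m=0}^k(1+b_{i,m})$ of the components along negative-curvature directions for the accelerated gradient iteration $y^k=x^k+\gamma_k(x^k-x^{k-1})$, $x^{k+1}=x^k+\beta_k(x^k-x^{k-1})-\alpha Hy^k$, $x^0=x^1$, applied to $f(x)=\frac12x^THx$. *)

theory Defs
  imports Complex_Main
begin

fun growth_b :: "real \<Rightarrow> real \<Rightarrow> (nat \<Rightarrow> real) \<Rightarrow> (nat \<Rightarrow> real) \<Rightarrow> nat \<Rightarrow> real" where
  "growth_b a lam beta gamma 0 = 0"
| "growth_b a lam beta gamma (Suc k) =
     (beta (Suc k) + gamma (Suc k) * a * \<bar>lam\<bar>) * (1 - 1 / (1 + growth_b a lam beta gamma k))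
     + a * \<bar>lam\<bar>"

end

theory Submission
  imports Defs
begin

lemma fix_pt:
  fixes c :: real assumes c: "0 < c"
  defines "s \<equiv> c + sqrt c * sqrt (1 + c)"
  shows "s \<ge> c" "(1 + c) * (s / (1 + s)) + c = s"
proof -
  define r where "r = sqrt (c * (1 + c))"
  have r: "r \<ge> 0" "r^2 = c * (1 + c)" using c by (auto simp: r_def)
  have sr: "s = c + r" by (simp add: s_def r_def real_sqrt_mult)
  show "s \<ge> c" using sr r by simp
  have "s^2 = 2*c*s + c" using sr r by (simp add: power2_eq_square algebra_simps)
  moreover have "1 + s > 0" using sr r c by simp
  ultimately show "(1 + c) * (s / (1 + s)) + c = s"
    by (simp add: field_simps power2_eq_square)
qed

lemma frac_mono:
  fixes x y :: real assumes "0 \<le> x" "x \<le> y" shows "x / (1 + x) \<le> y / (1 + y)"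
  using assms by (simp add: field_simps)

lemma main_conv:
  fixes c :: real and t b :: "nat \<Rightarrow> real"
  assumes c: "0 < c"
    and tmono: "\<And>k. 1 \<le> k \<Longrightarrow> t k \<le> t (Suc k)"
    and trange: "\<And>k. 1 \<le> k \<Longrightarrow> 0 \<le> t k \<and> t k \<le> 1"
    and tlim: "t \<longlonglongrightarrow> 1"
    and b0: "b 0 = 0"
    and bS: "\<And>k. b (Suc k) = t (Suc k) * (1 + c) * (b k / (1 + b k)) + c"
  shows "b \<longlonglongrightarrow> c + sqrt c * sqrt (1 + c)"
proof -
  define s where "s = c + sqrt c * sqrt (1 + c)"
  have sc: "s \<ge> c" and sfix: "(1 + c) * (s / (1 + s)) + c = s"
    using fix_pt[OF c] by (auto simp: s_def)
  have nn: "b k \<ge> 0" for k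
  proof (induction k)
    case 0 then show ?case using b0 by simp
  next
    case (Suc j)
    have "t (Suc j) * (1 + c) \<ge> 0" using trange[of "Suc j"] c by simp
    moreover have "b j / (1 + b j) \<ge> 0" using Suc by simp
    ultimately have "t (Suc j) * (1 + c) * (b j / (1 + b j)) \<ge> 0" by (rule mult_nonneg_nonneg)
    then show ?case using bS[of j] c by linarith
  qed
  have mono: "b k \<le> b (Suc k)" for k
  proof (induction k)
    case 0 then show ?case using b0 bS[of 0] c by simp
  next
    case (Suc j)
    have t1: "t (Suc j) \<le> t (Suc (Suc j))" "0 \<le> t (Suc j)" using tmono[of "Suc j"] trange[of "Suc j"] by auto
    have f1: "b j / (1 + b j) \<le> b (Suc j) / (1 + b (Suc j))" using frac_mono[OF nn Suc] .
    have f0: "0 \<le> b j / (1 + b j)" using nn[of j] by simp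
    have "t (Suc j) * (b j / (1 + b j)) \<le> t (Suc (Suc j)) * (b (Suc j) / (1 + b (Suc j)))"
      using mult_mono[OF t1(1) f1] t1 f0 by linarith
    then have "(1 + c) * (t (Suc j) * (b j / (1 + b j))) \<le> (1 + c) * (t (Suc (Suc j)) * (b (Suc j) / (1 + b (Suc j))))"
      using c by (intro mult_left_mono) auto
    then have "t (Suc j) * (1 + c) * (b j / (1 + b j)) \<le> t (Suc (Suc j)) * (1 + c) * (b (Suc j) / (1 + b (Suc j)))"
      by (simp only: ac_simps)
    then show ?case using bS[of j] bS[of "Suc j"] by simp
  qed
  have bnd: "b k \<le> s" for k
  proof (induction k)
    case 0 then show ?case using b0 sc c by simp
  next
    case (Suc j)
    have t1: "t (Suc j) \<le> 1" "0 \<le> t (Suc j)" using trange[of "Suc j"] by auto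
    have f1: "b j / (1 + b j) \<le> s / (1 + s)" using frac_mono[OF nn Suc] .
    have f0: "0 \<le> b j / (1 + b j)" using nn[of j] by simp
    have "t (Suc j) * (b j / (1 + b j)) \<le> 1 * (s / (1 + s))"
      using mult_mono[OF t1(1) f1] t1 f0 by linarith
    then have "(1 + c) * (t (Suc j) * (b j / (1 + b j))) \<le> (1 + c) * (s / (1 + s))"
      using c by (intro mult_left_mono) auto
    then have "t (Suc j) * (1 + c) * (b j / (1 + b j)) \<le> (1 + c) * (s / (1 + s))"
      by (simp only: ac_simps)
    then show ?case using bS[of j] sfix by simp
  qed
  have inc: "incseq b" using mono by (simp add: incseq_SucI)
  obtain l where lim: "b \<longlonglongrightarrow> l" and le: "\<forall>i. b i \<le> l"
    using incseq_convergent[OF inc, of s] bnd by blast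
  have l0: "l \<ge> c" using le[rule_format, of 1] bS[of 0] b0 by simp
  have lim1: "(\<lambda>k. t (Suc k) * (1 + c) * (b k / (1 + b k)) + c) \<longlonglongrightarrow> 1 * (1 + c) * (l / (1 + l)) + c"
    using l0 c
    by (intro tendsto_intros LIMSEQ_Suc[OF tlim] lim) auto
  have lim2: "(\<lambda>k. b (Suc k)) \<longlonglongrightarrow> 1 * (1 + c) * (l / (1 + l)) + c"
    using lim1 by (simp only: bS)
  moreover have "(\<lambda>k. b (Suc k)) \<longlonglongrightarrow> l" using LIMSEQ_Suc[OF lim] .
  moreover note bS
  ultimately have leq: "l = (1 + c) * (l / (1 + l)) + c"
    using LIMSEQ_unique by (metis (no_types, lifting) LIMSEQ_unique lim2 mult_1)
  have "l * (1 + l) = (1 + c) * l + c * (1 + l)"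
  proof -
    have "1 + l > 0" using l0 c by simp
    then show ?thesis using leq by (simp add: field_simps)
  qed
  then have q: "(l - c)^2 = c * (1 + c)" by (simp add: power2_eq_square algebra_simps)
  have "l - c = sqrt (c * (1 + c))" using q l0 by (metis diff_ge_0_iff_ge real_sqrt_unique)
  then have "l = s" by (simp add: s_def real_sqrt_mult)
  then show ?thesis using lim s_def by simp
qed

theorem corollary4p3:
  fixes n p :: nat and lam :: "nat \<Rightarrow> real" and L \<alpha> :: real
    and \<beta> \<gamma> :: "nat \<Rightarrow> real"
  assumes hp: "1 \<le> p" "p < n"
    and hsorted: "\<And>i j. 1 \<le> i \<Longrightarrow> i \<le> j \<Longrightarrow> j \<le> n \<Longrightarrow> lam j \<le> lam i"
    and hnonneg: "lam (n - p) \<ge> 0"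
    and hneg: "lam (n - p + 1) < 0"
    and hL: "L = max (lam 1) (- lam n)"
    and h\<alpha>: "0 < \<alpha>" "\<alpha> < 1 / L"
    and h\<gamma>mono: "\<And>k. 1 \<le> k \<Longrightarrow> \<gamma> k \<le> \<gamma> (Suc k)"
    and h\<beta>mono: "\<And>k. 1 \<le> k \<Longrightarrow> \<beta> k \<le> \<beta> (Suc k)"
    and h\<gamma>range: "\<And>k. 1 \<le> k \<Longrightarrow> 0 \<le> \<gamma> k \<and> \<gamma> k \<le> 1"
    and h\<beta>range: "\<And>k. 1 \<le> k \<Longrightarrow> 0 \<le> \<beta> k \<and> \<beta> k \<le> 1"
    and heq: "\<And>k. 1 \<le> k \<Longrightarrow> \<gamma> k = \<beta> k"
    and h\<gamma>lim: "\<gamma> \<longlonglongrightarrow> 1"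
    and h\<beta>lim: "\<beta> \<longlonglongrightarrow> 1"
  shows "\<forall>i. 1 \<le> i \<and> i \<le> n \<and> lam i < 0 \<longrightarrow>
           (\<lambda>k. growth_b \<alpha> (lam i) \<beta> \<gamma> k) \<longlonglongrightarrow>
             \<alpha> * \<bar>lam i\<bar> + sqrt (\<alpha> * \<bar>lam i\<bar>) * sqrt (1 + \<alpha> * \<bar>lam i\<bar>)"
proof (intro allI impI)
  fix i assume hi: "1 \<le> i \<and> i \<le> n \<and> lam i < 0"
  define c where "c = \<alpha> * \<bar>lam i\<bar>"
  have c: "0 < c" using hi h\<alpha> by (simp add: c_def mult_pos_neg)
  have nn: "growth_b \<alpha> (lam i) \<beta> \<gamma> k \<ge> 0" for k
  proof (induction k)
    case 0 then show ?case by simp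
  next
    case (Suc j)
    have "\<beta> (Suc j) \<ge> 0" "\<gamma> (Suc j) \<ge> 0" using h\<beta>range[of "Suc j"] h\<gamma>range[of "Suc j"] by auto
    moreover have "1 - 1 / (1 + growth_b \<alpha> (lam i) \<beta> \<gamma> j) \<ge> 0" using Suc by simp
    ultimately show ?case using c h\<alpha> by (simp add: c_def)
  qed
  show "(\<lambda>k. growth_b \<alpha> (lam i) \<beta> \<gamma> k) \<longlonglongrightarrow>
             \<alpha> * \<bar>lam i\<bar> + sqrt (\<alpha> * \<bar>lam i\<bar>) * sqrt (1 + \<alpha> * \<bar>lam i\<bar>)"
    unfolding c_def[symmetric]
  proof (rule main_conv[OF c h\<beta>mono h\<beta>range h\<beta>lim])
    show "growth_b \<alpha> (lam i) \<beta> \<gamma> 0 = 0" by simp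
    fix k
    let ?b = "growth_b \<alpha> (lam i) \<beta> \<gamma> k"
    have p: "1 + ?b > 0" using nn[of k] by simp
    have "1 - 1 / (1 + ?b) = ?b / (1 + ?b)" using p by (simp add: field_simps)
    moreover have "\<gamma> (Suc k) = \<beta> (Suc k)" using heq by simp
    ultimately show "growth_b \<alpha> (lam i) \<beta> \<gamma> (Suc k) = \<beta> (Suc k) * (1 + c) * (?b / (1 + ?b)) + c"
      by (simp only: growth_b.simps c_def) (simp add: algebra_simps)
  qed
qed

end
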